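(* Let $0<\alpha\le\delta<\infty$, $0<\gamma<\tfrac13$, and let $H_{\gamma/\delta}$ be the Banach space of real sequences $x=(x_k)_{k\ge0}$ with $\|x\|=\sum_{k\ge0}(\gamma/\delta)^k|x_k|<\infty$. Let $\mathcal R^a_1(a)_k=\frac{1}{k+1}\sum_{n=0}^ka_na_{k-n}$. If $a_0\in X_{\alpha,\delta}$ and $a(t)$ denotes the solution of the initial value problem $\frac{d}{dt}a(t)=\mathcal R^a_1(a(t))-a(t)$, $a(0)=a_0$, in $H_{\gamma/\delta}$, then $a(t)\in X_{\alpha,\delta}$ for all $t\ge0$ and $\lim_{t\to\infty}\|a(t)-\bar\alpha\|=0$, where $\bar\alpha=(1,\alpha,\alpha^2,\alpha^3,\dots)$.
   Context: $X_{\alpha,\delta}$ is the set of real sequences $a=(a_k)_{k\ge0}$ with $a_0=1$, $a_1=\alpha$, $0\le a_k\le\delta^k$ for $k\ge2$; it is a subset of $H_{\gamma/\delta}$, and the metric on it is $d(a,b)=\|a-b\|$. *)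

theory Defs
  imports "HOL-Analysis.Analysis"
begin

definition inH :: "real \<Rightarrow> (nat \<Rightarrow> real) \<Rightarrow> bool" where
  "inH w x \<longleftrightarrow> summable (\<lambda>k. w ^ k * \<bar>x k\<bar>)"

definition hnorm :: "real \<Rightarrow> (nat \<Rightarrow> real) \<Rightarrow> real" where
  "hnorm w x = (\<Sum>k. w ^ k * \<bar>x k\<bar>)"

definition Xset :: "real \<Rightarrow> real \<Rightarrow> (nat \<Rightarrow> real) set" where
  "Xset \<alpha> \<delta> = {a. a 0 = 1 \<and> a 1 = \<alpha> \<and> (\<forall>k\<ge>2. 0 \<le> a k \<and> a k \<le> \<delta> ^ k)}"

definition R1 :: "(nat \<Rightarrow> real) \<Rightarrow> nat \<Rightarrow> real" where
  "R1 a k = (1 / real (k + 1)) * (\<Sum>n\<le>k. a n * a (k - n))"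

text \<open>a is a solution on [0,\<infinity>) in H_w of a' = R1 a - a with a(0) = a0,
  the derivative taken in the H_w norm (one-sided at t = 0).\<close>
definition is_solution :: "real \<Rightarrow> (nat \<Rightarrow> real) \<Rightarrow> (real \<Rightarrow> nat \<Rightarrow> real) \<Rightarrow> bool" where
  "is_solution w a0 a \<longleftrightarrow>
     a 0 = a0 \<and> (\<forall>t\<ge>0. inH w (a t) \<and> inH w (R1 (a t))) \<and>
     (\<forall>t\<ge>0. ((\<lambda>s. hnorm w (\<lambda>k. (a s k - a t k) / (s - t) - (R1 (a t) k - a t k)))
               \<longlongrightarrow> 0) (at t within {0..}))"

end

theory Submission
  imports Defs "HOL-Real_Asymp.Real_Asymp"
begin


lemma mono_lemma:
  fixes f f' :: "real \<Rightarrow> real"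
  assumes d: "\<And>x. 0 \<le> x \<Longrightarrow> (f has_real_derivative f' x) (at x within {0..})"
    and n: "\<And>x. T < x \<Longrightarrow> x < t \<Longrightarrow> f' x \<le> 0"
    and "0 \<le> T" "T \<le> t"
  shows "f t \<le> f T"
proof -
  have c: "continuous_on {T..t} f"
  proof (rule continuous_on_subset[of "{0..}"])
    show "continuous_on {0..} f"
      using d by (meson atLeast_iff continuous_on_eq_continuous_within DERIV_continuous)
  qed (use assms in auto)
  have "f T \<ge> f t"
  proof (rule DERIV_nonpos_imp_decreasing_open[OF \<open>T \<le> t\<close> _ c])
    fix x assume x: "T < x" "x < t"
    have "at x within {0..} = at x"
      by (rule at_within_interior) (use x \<open>0 \<le> T\<close> in auto)
    then show "\<exists>y. DERIV f x :> y \<and> y \<le> 0"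
      using d[of x] n[OF x] x \<open>0 \<le> T\<close> by auto
  qed
  then show ?thesis .
qed

lemma cmp_upper:
  fixes y F :: "real \<Rightarrow> real"
  assumes d: "\<And>s. 0 \<le> s \<Longrightarrow> (y has_real_derivative (- c * y s + F s)) (at s within {0..})"
    and b: "\<And>s. T \<le> s \<Longrightarrow> F s \<le> c * B"
    and "0 \<le> T" "T \<le> t"
  shows "y t - B \<le> exp (- c * (t - T)) * (y T - B)"
proof -
  define h where "h s = exp (c * s) * (y s - B)" for s
  have hd: "(h has_real_derivative (exp (c * s) * (F s - c * B))) (at s within {0..})" if "0 \<le> s" for s
    unfolding h_def
    by (rule derivative_eq_intros refl d[OF that] | simp)+ (simp add: algebra_simps)
  have "h t \<le> h T"
    by (rule mono_lemma[OF hd]) (use assms b in \<open>auto intro!: mult_nonneg_nonpos\<close>)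
  then have "exp (c * t) * (y t - B) \<le> exp (c * T) * (y T - B)" by (simp add: h_def)
  then have "exp (- c * t) * (exp (c * t) * (y t - B)) \<le> exp (- c * t) * (exp (c * T) * (y T - B))"
    by (simp add: mult_left_mono)
  then show ?thesis by (simp add: algebra_simps flip: exp_add)
qed

lemma cmp_lower:
  fixes y F :: "real \<Rightarrow> real"
  assumes d: "\<And>s. 0 \<le> s \<Longrightarrow> (y has_real_derivative (- c * y s + F s)) (at s within {0..})"
    and b: "\<And>s. T \<le> s \<Longrightarrow> F s \<ge> c * B"
    and "0 \<le> T" "T \<le> t"
  shows "y t - B \<ge> exp (- c * (t - T)) * (y T - B)"
proof -
  have "(\<lambda>s. - y s) t - (- B) \<le> exp (- c * (t - T)) * ((\<lambda>s. - y s) T - (-B))"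
  proof (rule cmp_upper[where F = "\<lambda>s. - F s"])
    fix s :: real assume "0 \<le> s"
    show "((\<lambda>s. - y s) has_real_derivative (- c * (- y s) + - F s)) (at s within {0..})"
      using DERIV_minus[OF d[OF \<open>0 \<le> s\<close>]] by simp
  qed (use assms b in auto)
  then show ?thesis by (simp add: algebra_simps)
qed



lemma comp_deriv:
  assumes w: "w > 0" and sol: "is_solution w a0 a" and t: "t \<ge> 0"
  shows "((\<lambda>s. a s k) has_real_derivative (R1 (a t) k - a t k)) (at t within {0..})"
proof -
  define q where "q s = (\<lambda>k. (a s k - a t k) / (s - t) - (R1 (a t) k - a t k))" for s
  have lim: "((\<lambda>s. hnorm w (q s)) \<longlongrightarrow> 0) (at t within {0..})"
    using sol t unfolding is_solution_def q_def by blast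
  have sm: "summable (\<lambda>k. w ^ k * \<bar>q s k\<bar>)" if s: "s \<ge> 0" for s
  proof (rule summable_comparison_test')
    have s1: "summable (\<lambda>k. w ^ k * \<bar>a s k\<bar>)" "summable (\<lambda>k. w ^ k * \<bar>a t k\<bar>)"
      "summable (\<lambda>k. w ^ k * \<bar>R1 (a t) k\<bar>)"
      using sol s t unfolding is_solution_def inH_def by auto
    show "summable (\<lambda>k. (1 / \<bar>s - t\<bar>) * (w ^ k * \<bar>a s k\<bar>) + (1 / \<bar>s - t\<bar> + 1) * (w ^ k * \<bar>a t k\<bar>)
        + w ^ k * \<bar>R1 (a t) k\<bar>)"
      by (intro summable_add summable_mult s1)
    fix k
    have "\<bar>q s k\<bar> \<le> \<bar>a s k - a t k\<bar> / \<bar>s - t\<bar> + \<bar>R1 (a t) k\<bar> + \<bar>a t k\<bar>"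
    proof -
      have "\<bar>(a s k - a t k) / (s - t)\<bar> = \<bar>a s k - a t k\<bar> / \<bar>s - t\<bar>" by (rule abs_divide)
      have H: "\<And>X R A::real. \<bar>X - (R - A)\<bar> \<le> \<bar>X\<bar> + \<bar>R\<bar> + \<bar>A\<bar>" by arith
      from H[of "(a s k - a t k) / (s - t)" "R1 (a t) k" "a t k"] show ?thesis
        unfolding q_def \<open>\<bar>(a s k - a t k) / (s - t)\<bar> = \<bar>a s k - a t k\<bar> / \<bar>s - t\<bar>\<close> .
    qed
    also have "\<dots> \<le> (1 / \<bar>s - t\<bar>) * \<bar>a s k\<bar> + (1 / \<bar>s - t\<bar> + 1) * \<bar>a t k\<bar> + \<bar>R1 (a t) k\<bar>"
    proof -
      have "\<bar>a s k - a t k\<bar> / \<bar>s - t\<bar> \<le> (\<bar>a s k\<bar> + \<bar>a t k\<bar>) / \<bar>s - t\<bar>"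
        by (intro divide_right_mono abs_triangle_ineq4) simp
      then show ?thesis by (simp add: add_divide_distrib distrib_right)
    qed
    finally have "w ^ k * \<bar>q s k\<bar> \<le> w ^ k * ((1 / \<bar>s - t\<bar>) * \<bar>a s k\<bar> + (1 / \<bar>s - t\<bar> + 1) * \<bar>a t k\<bar> + \<bar>R1 (a t) k\<bar>)"
      using w by (intro mult_left_mono) auto
    then show "norm (w ^ k * \<bar>q s k\<bar>) \<le> (1 / \<bar>s - t\<bar>) * (w ^ k * \<bar>a s k\<bar>) + (1 / \<bar>s - t\<bar> + 1) * (w ^ k * \<bar>a t k\<bar>)
        + w ^ k * \<bar>R1 (a t) k\<bar>"
      using w by (simp add: algebra_simps)
  qed
  have bd: "\<bar>q s k\<bar> \<le> hnorm w (q s) / w ^ k" if s: "s \<ge> 0" for s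
  proof -
    have "sum (\<lambda>k. w ^ k * \<bar>q s k\<bar>) {k} \<le> hnorm w (q s)"
      unfolding hnorm_def by (rule sum_le_suminf[OF sm[OF s]]) (use w in auto)
    then show ?thesis using w by (simp add: field_simps)
  qed
  have "((\<lambda>s. q s k) \<longlongrightarrow> 0) (at t within {0..})"
  proof (rule Lim_null_comparison)
    show "\<forall>\<^sub>F s in at t within {0..}. norm (q s k) \<le> hnorm w (q s) / w ^ k"
      using bd by (auto simp: eventually_at_filter)
    show "((\<lambda>s. hnorm w (q s) / w ^ k) \<longlongrightarrow> 0) (at t within {0..})"
      using tendsto_divide_zero[OF lim] by simp
  qed
  then have "((\<lambda>s. q s k + (R1 (a t) k - a t k)) \<longlongrightarrow> 0 + (R1 (a t) k - a t k)) (at t within {0..})"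
    by (intro tendsto_add tendsto_const)
  then show ?thesis
    unfolding has_field_derivative_iff q_def by simp
qed



lemma exp_decay: "(c::real) > 0 \<Longrightarrow> ((\<lambda>t. exp (- c * (t - T)) * K) \<longlongrightarrow> 0) at_top"
  by real_asymp

lemma ode_limit:
  fixes y F :: "real \<Rightarrow> real"
  assumes c: "c > 0"
    and d: "\<And>s. 0 \<le> s \<Longrightarrow> (y has_real_derivative (- c * y s + F s)) (at s within {0..})"
    and lim: "(F \<longlongrightarrow> c * L) at_top"
  shows "(y \<longlongrightarrow> L) at_top"
proof (rule tendstoI)
  fix \<epsilon> :: real assume \<epsilon>: "\<epsilon> > 0"
  define e where "e = \<epsilon> / 3"
  have e: "e > 0" using \<epsilon> by (simp add: e_def)
  have "\<forall>\<^sub>F t in at_top. dist (F t) (c * L) < c * e"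
    using lim c e by (auto intro: tendstoD)
  then obtain T0 where T0: "\<And>t. t \<ge> T0 \<Longrightarrow> \<bar>F t - c * L\<bar> < c * e"
    by (auto simp: eventually_at_top_linorder dist_real_def)
  define T where "T = max T0 0"
  have T: "T \<ge> 0" "T \<ge> T0" by (auto simp: T_def)
  have Fb: "\<bar>F s - c * L\<bar> < c * e" if "T \<le> s" for s using T0[of s] T that by auto
  have up: "y t - (L + e) \<le> exp (- c * (t - T)) * (y T - (L + e))" if "T \<le> t" for t
  proof (rule cmp_upper[OF d _ T(1) that])
    fix s assume "T \<le> s"
    from Fb[OF this] show "F s \<le> c * (L + e)" by (simp add: algebra_simps abs_less_iff)
  qed
  have lo: "y t - (L - e) \<ge> exp (- c * (t - T)) * (y T - (L - e))" if "T \<le> t" for t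
  proof (rule cmp_lower[OF d _ T(1) that])
    fix s assume "T \<le> s"
    from Fb[OF this] show "F s \<ge> c * (L - e)" by (simp add: algebra_simps abs_less_iff)
  qed
  have e1: "\<forall>\<^sub>F t in at_top. \<bar>exp (- c * (t - T)) * (y T - (L + e))\<bar> < e"
    using tendstoD[OF exp_decay[OF c, of T "y T - (L + e)"] e] by (simp add: dist_real_def)
  have e2: "\<forall>\<^sub>F t in at_top. \<bar>exp (- c * (t - T)) * (y T - (L - e))\<bar> < e"
    using tendstoD[OF exp_decay[OF c, of T "y T - (L - e)"] e] by (simp add: dist_real_def)
  have e3: "\<forall>\<^sub>F t in at_top. T \<le> t" by (rule eventually_ge_at_top)
  show "\<forall>\<^sub>F t in at_top. dist (y t) L < \<epsilon>"
    using e1 e2 e3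
  proof eventually_elim
    case (elim t)
    with up[of t] lo[of t] show ?case unfolding dist_real_def e_def by (simp add: abs_less_iff) linarith
  qed
qed



lemma sum_split: "2 \<le> (k::nat) \<Longrightarrow> (\<Sum>n\<le>k. g n) = g 0 + g k + (\<Sum>n\<in>{1..k-1}. (g n::real))"
  by (cases k) (auto simp: sum.atMost_Suc atMost_atLeast0 sum.atLeast_Suc_atMost)

lemma aux: "(m::real) \<noteq> 0 \<Longrightarrow> (1/m)*(2*x+S) - x = -((m-2)/m)*x + (1/m)*S"
  by (simp add: field_simps)

lemma R1_split:
  assumes "2 \<le> k" "x 0 = 1"
  shows "R1 x k - x k = - ((real k - 1) / (real k + 1)) * x k
     + (1 / (real k + 1)) * (\<Sum>n\<in>{1..k-1}. x n * x (k - n))"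
proof -
  have "R1 x k = (1 / (real k + 1)) * (2 * x k + (\<Sum>n\<in>{1..k-1}. x n * x (k - n)))"
    unfolding R1_def using assms by (simp add: sum_split[OF assms(1)])
  moreover have "(1 / (real k + 1)) * (2 * x k + S) - x k = - ((real k - 1) / (real k + 1)) * x k
     + (1 / (real k + 1)) * S" for S
    using aux[of "real k + 1" "x k" S] by (simp add: algebra_simps)
  ultimately show ?thesis by simp
qed

theorem proposition13:
  fixes \<alpha> \<delta> \<gamma> :: real and a0 :: "nat \<Rightarrow> real" and a :: "real \<Rightarrow> nat \<Rightarrow> real"
  assumes "0 < \<alpha>" "\<alpha> \<le> \<delta>" "0 < \<gamma>" "\<gamma> < 1/3"
    and "a0 \<in> Xset \<alpha> \<delta>"
    and "is_solution (\<gamma> / \<delta>) a0 a"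
  shows "(\<forall>t\<ge>0. a t \<in> Xset \<alpha> \<delta>) \<and>
         ((\<lambda>t. hnorm (\<gamma> / \<delta>) (\<lambda>k. a t k - \<alpha> ^ k)) \<longlongrightarrow> 0) at_top"
proof -
  define w where "w = \<gamma> / \<delta>"
  have dpos: "\<delta> > 0" using assms by auto
  have wpos: "w > 0" using assms dpos by (simp add: w_def)
  have sol: "is_solution w a0 a" using assms by (simp add: w_def)
  have der: "((\<lambda>s. a s k) has_real_derivative (R1 (a t) k - a t k)) (at t within {0..})"
    if "t \<ge> 0" for t k
    by (rule comp_deriv[OF wpos sol that])
  have ainit: "a 0 = a0" using sol by (simp add: is_solution_def)
  have X0: "a0 0 = 1" "a0 1 = \<alpha>" "\<And>k. k \<ge> 2 \<Longrightarrow> 0 \<le> a0 k \<and> a0 k \<le> \<delta> ^ k"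
    using assms(5) by (auto simp: Xset_def)
  have cont0: "continuous_on {0..} (\<lambda>s. a s k)" for k
    using der by (meson atLeast_iff continuous_on_eq_continuous_within DERIV_continuous)
  have a0c: "a t 0 = 1" if t: "t \<ge> 0" for t
  proof -
    have "compact ((\<lambda>s. a s 0) ` {0..t})"
      by (rule compact_continuous_image[OF continuous_on_subset[OF cont0] compact_Icc]) auto
    then have "bounded ((\<lambda>s. a s 0) ` {0..t})" by (rule compact_imp_bounded)
    then obtain M where "\<forall>x\<in>(\<lambda>s. a s 0) ` {0..t}. norm x \<le> M" by (auto simp: bounded_iff)
    then have M: "\<And>s. s \<in> {0..t} \<Longrightarrow> \<bar>a s 0\<bar> \<le> M" by auto
    define f where "f s = exp (- (2 * M) * s) * ((a s 0 - 1) * (a s 0 - 1))" for s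
    have fd: "(f has_real_derivative
       (exp (- (2 * M) * s) * (2 * (a s 0 - 1) * (a s 0 - 1) * (a s 0 - M)))) (at s within {0..})"
      if "s \<ge> 0" for s
    proof -
      have R0: "R1 (a s) 0 - a s 0 = a s 0 * a s 0 - a s 0" by (simp add: R1_def)
      show ?thesis
        unfolding f_def
        by (rule derivative_eq_intros refl der[OF that, of 0, unfolded R0] | simp)+ (simp add: algebra_simps)
    qed
    have "f t \<le> f 0"
    proof (rule mono_lemma[OF fd _ order_refl t])
      fix x assume x: "0 < x" "x < t"
      have "a x 0 \<le> M" using M[of x] x by auto
      moreover have "0 \<le> 2 * (a x 0 - 1) * (a x 0 - 1)"
        using zero_le_square[of "a x 0 - 1"] by (simp only: mult.assoc)
      ultimately show "exp (- (2 * M) * x) * (2 * (a x 0 - 1) * (a x 0 - 1) * (a x 0 - M)) \<le> 0"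
        by (intro mult_nonneg_nonpos mult_nonneg_nonpos[of "2 * (a x 0 - 1) * (a x 0 - 1)"]) auto
    qed
    also have "f 0 = 0" using ainit X0 by (simp add: f_def)
    finally have "(a t 0 - 1) * (a t 0 - 1) \<le> 0" by (simp add: f_def mult_le_0_iff)
    then have "(a t 0 - 1) * (a t 0 - 1) = 0" using zero_le_square[of "a t 0 - 1"] by linarith
    then show ?thesis by simp
  qed
  have a1c: "a t 1 = \<alpha>" if t: "t \<ge> 0" for t
  proof -
    have d1: "((\<lambda>s. a s 1) has_real_derivative 0) (at s within {0..})" if "s \<ge> 0" for s
    proof -
      have "R1 (a s) 1 - a s 1 = 0" using a0c[OF that] by (simp add: R1_def)
      then show ?thesis using der[OF that, of 1] by simp
    qed
    have d1': "((\<lambda>s. - a s 1) has_real_derivative 0) (at s within {0..})" if "s \<ge> 0" for s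
      using DERIV_minus[OF d1[OF that]] by simp
    have "a t 1 \<le> a 0 1" by (rule mono_lemma[OF d1 _ order_refl t]) auto
    moreover have "- a t 1 \<le> - a 0 1" by (rule mono_lemma[OF d1' _ order_refl t]) auto
    ultimately show ?thesis using ainit X0 by simp
  qed

  define c where "c k = (real k - 1) / (real k + 1)" for k :: nat
  define F where "F k t = (1 / (real k + 1)) * (\<Sum>n\<in>{1..k-1}. a t n * a t (k - n))" for k t
  have cpos: "c k > 0" if "k \<ge> 2" for k using that by (simp add: c_def)
  have derk: "((\<lambda>s. a s k) has_real_derivative (- c k * a s k + F k s)) (at s within {0..})"
    if "k \<ge> 2" "s \<ge> 0" for k s
    using der[OF that(2), of k] R1_split[OF that(1), of "a s"] a0c[OF that(2)]
    by (simp add: c_def F_def)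
  have bounds: "\<forall>t\<ge>0. 0 \<le> a t k \<and> a t k \<le> \<delta> ^ k" for k
  proof (induction k rule: less_induct)
    case (less k)
    show ?case
    proof (cases "k \<ge> 2")
      case False
      then have "k = 0 \<or> k = 1" by auto
      then show ?thesis using a0c a1c assms(1,2) by auto
    next
      case True
      have FB: "0 \<le> F k t \<and> F k t \<le> c k * \<delta> ^ k" if t: "t \<ge> 0" for t
      proof -
        have tb: "0 \<le> a t n * a t (k - n) \<and> a t n * a t (k - n) \<le> \<delta> ^ k" if n: "n \<in> {1..k-1}" for n
        proof -
          have "n < k" "k - n < k" using n True by auto
          then have h: "0 \<le> a t n" "a t n \<le> \<delta> ^ n" "0 \<le> a t (k - n)" "a t (k - n) \<le> \<delta> ^ (k - n)"
            using less.IH t by blast+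
          have "a t n * a t (k - n) \<le> \<delta> ^ n * \<delta> ^ (k - n)"
            by (rule mult_mono) (use h in auto)
          also have "\<delta> ^ n * \<delta> ^ (k - n) = \<delta> ^ k"
            using \<open>n < k\<close> by (simp flip: power_add)
          finally show ?thesis using h by simp
        qed
        have s0: "0 \<le> (\<Sum>n\<in>{1..k-1}. a t n * a t (k - n))"
          by (rule sum_nonneg) (use tb in auto)
        have s1: "(\<Sum>n\<in>{1..k-1}. a t n * a t (k - n)) \<le> real (card {1..k-1}) * \<delta> ^ k"
          by (rule sum_bounded_above) (use tb in auto)
        have ck: "real (card {1..k-1}) = real k - 1" using True by (simp add: of_nat_diff)
        have "F k t \<le> (1 / (real k + 1)) * ((real k - 1) * \<delta> ^ k)"
          unfolding F_def using s1 ck by (intro mult_left_mono) auto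
        also have "\<dots> = c k * \<delta> ^ k" by (simp add: c_def)
        finally show ?thesis using s0 by (simp add: F_def)
      qed
      show ?thesis
      proof (intro allI impI conjI)
        fix t :: real assume t: "t \<ge> 0"
        have "a t k - 0 \<ge> exp (- c k * (t - 0)) * (a 0 k - 0)"
          by (rule cmp_lower[where y = "\<lambda>s. a s k", OF derk[OF True]]) (use FB t in auto)
        moreover have "a 0 k \<ge> 0" using X0(3)[OF True] ainit by simp
        ultimately show "0 \<le> a t k" by (smt (verit) exp_gt_zero mult_nonneg_nonneg)
        have "a t k - \<delta> ^ k \<le> exp (- c k * (t - 0)) * (a 0 k - \<delta> ^ k)"
          by (rule cmp_upper[where y = "\<lambda>s. a s k", OF derk[OF True]]) (use FB t in auto)
        moreover have "a 0 k \<le> \<delta> ^ k" using X0(3)[OF True] ainit by simp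
        ultimately show "a t k \<le> \<delta> ^ k" by (smt (verit) exp_gt_zero mult_nonneg_nonpos)
      qed
    qed
  qed
  have limk: "((\<lambda>t. a t k) \<longlongrightarrow> \<alpha> ^ k) at_top" for k
  proof (induction k rule: less_induct)
    case (less k)
    show ?case
    proof (cases "k \<ge> 2")
      case False
      then have k01: "k = 0 \<or> k = 1" by auto
      have "\<forall>\<^sub>F t in at_top. a t k = \<alpha> ^ k"
        using eventually_ge_at_top[of "0::real"] by eventually_elim (use a0c a1c k01 in auto)
      then show ?thesis by (rule tendsto_eventually)
    next
      case True
      have "((\<lambda>t. F k t) \<longlongrightarrow> (1 / (real k + 1)) * (\<Sum>n\<in>{1..k-1}. \<alpha> ^ n * \<alpha> ^ (k - n))) at_top"
        unfolding F_def
        by (intro tendsto_intros less.IH) auto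
      also have "(\<Sum>n\<in>{1..k-1}. \<alpha> ^ n * \<alpha> ^ (k - n)) = (\<Sum>n\<in>{1..k-1}. \<alpha> ^ k)"
        by (rule sum.cong) (auto simp flip: power_add)
      also have "(1 / (real k + 1)) * \<dots> = c k * \<alpha> ^ k"
        using True by (simp add: c_def of_nat_diff)
      finally show ?thesis
        by (intro ode_limit[where y="\<lambda>s. a s k" and F="F k" and c="c k" and L="\<alpha> ^ k"] cpos[OF True] derk[OF True])
    qed
  qed
  have part1: "\<forall>t\<ge>0. a t \<in> Xset \<alpha> \<delta>"
    using a0c a1c bounds by (auto simp: Xset_def)
  have lim2: "((\<lambda>t. \<Sum>k. w ^ k * \<bar>a t k - \<alpha> ^ k\<bar>) \<longlongrightarrow> (\<Sum>k. (0::real))) at_top"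
  proof (rule tannerys_theorem[where M = "\<lambda>k. 2 * \<gamma> ^ k", THEN conjunct2, THEN conjunct2])
    fix k
    have "((\<lambda>t. w ^ k * \<bar>a t k - \<alpha> ^ k\<bar>) \<longlongrightarrow> w ^ k * \<bar>\<alpha> ^ k - \<alpha> ^ k\<bar>) at_top"
      by (intro tendsto_intros limk)
    then show "((\<lambda>t. w ^ k * \<bar>a t k - \<alpha> ^ k\<bar>) \<longlongrightarrow> 0) at_top" by simp
  next
    show "summable (\<lambda>k. 2 * \<gamma> ^ k)"
      using assms(3,4) by (intro summable_mult summable_geometric) auto
  next
    show "at_top \<noteq> (bot :: real filter)" by simp
  next
    have bd: "norm (w ^ k * \<bar>a t k - \<alpha> ^ k\<bar>) \<le> 2 * \<gamma> ^ k" if t: "t \<ge> 0" for k t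
    proof -
      have "\<bar>a t k - \<alpha> ^ k\<bar> \<le> \<delta> ^ k + \<delta> ^ k"
      proof -
        have "\<alpha> ^ k \<le> \<delta> ^ k" using assms(1,2) by (intro power_mono) auto
        moreover have "0 \<le> a t k" "a t k \<le> \<delta> ^ k" using bounds t by auto
        moreover have "0 \<le> \<alpha> ^ k" using assms(1) by simp
        ultimately show ?thesis by linarith
      qed
      then have "w ^ k * \<bar>a t k - \<alpha> ^ k\<bar> \<le> w ^ k * (2 * \<delta> ^ k)"
        using wpos by (intro mult_left_mono) auto
      also have "\<dots> = 2 * (w * \<delta>) ^ k" by (simp add: power_mult_distrib)
      also have "w * \<delta> = \<gamma>" using dpos by (simp add: w_def)
      finally show ?thesis using wpos by simp
    qed
    show "\<forall>\<^sub>F (k, t) in at_top \<times>\<^sub>F at_top. norm (w ^ k * \<bar>a t k - \<alpha> ^ k\<bar>) \<le> 2 * \<gamma> ^ k"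
      unfolding eventually_prod_filter
      by (rule exI[of _ "\<lambda>_. True"], rule exI[of _ "\<lambda>t. t \<ge> (0::real)"])
         (use bd in \<open>auto intro: eventually_ge_at_top simp del: real_norm_def\<close>)
  qed
  show ?thesis
    using part1 lim2 by (simp add: hnorm_def w_def)
qed


end
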